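(* Let $J\in\mathbb{R}^{3\times3}$ be symmetric positive definite, and let $R_d:[0,\infty)\to\mathsf{SO(3)}$ be a $C^2$ attitude command with $\dot R_d=R_d\hat\Omega_d$. Let $k_R,k_\Omega>0$ and define the control $$u=-k_Re_R-k_\Omega e_\Omega+\Omega\times J\Omega-J\big(\hat\Omega R^TR_d\Omega_d-R^TR_d\dot\Omega_d\big).$$ Consider the closed-loop system $J\dot\Omega+\Omega\times J\Omega=u$, $\dot R=R\hat\Omega$. If the initial condition satisfies $$\Psi(R(0),R_d(0))<2,\qquad \|e_\Omega(0)\|^2<\frac{2k_R}{\lambda_{\max}(J)}\big(2-\Psi(R(0),R_d(0))\big),$$ then $\Psi(R(t),R_d(t))<2$ for all $t\ge0$ (so $e_R$ remains well defined), and the zero equilibrium $(e_R,e_\Omega)=(0,0)$ is exponentially stable with this set contained in its region of attraction: there exist constants $C,\beta>0$ (depending on $J,k_R,k_\Omega$) such that $$\|e_R(t)\|^2+\|e_\Omega(t)\|^2\le C\big(\|e_R(0)\|^2+\|e_\Omega(0)\|^2\big)e^{-\beta t}\quad\text{for all }t\ge0.$$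
   Context: $\mathsf{SO(3)}$ is the group of $3\times3$ rotation matrices; $\hat x$ denotes the skew-symmetric matrix with $\hat x y=x\times y$, and $\vee$ is its inverse. $\Psi(R,R_d)=2-\sqrt{1+\mathrm{tr}(R_d^TR)}$, $e_R=\frac{1}{2\sqrt{1+\mathrm{tr}(R_d^TR)}}(R_d^TR-R^TR_d)^\vee$ (defined when $\Psi<2$), and $e_\Omega=\Omega-R^TR_d\Omega_d$. $\lambda_{\max}(J)$ is the largest eigenvalue of $J$. *)

theory Defs
  imports "HOL-Analysis.Analysis"
begin

text \<open>hat map: hat x is the skew-symmetric matrix with (hat x) *v y = cross3 x y\<close>
definition hat :: "real^3 \<Rightarrow> real^3^3" where
  "hat x = vector [vector [0, - x$3, x$2],
                   vector [x$3, 0, - x$1],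
                   vector [- x$2, x$1, 0]]"

text \<open>vee map: inverse of hat on skew-symmetric matrices\<close>
definition vee :: "real^3^3 \<Rightarrow> real^3" where
  "vee M = vector [M$3$2, M$1$3, M$2$1]"

definition SO3 :: "(real^3^3) set" where
  "SO3 = {R. transpose R ** R = mat 1 \<and> det R = 1}"

definition Psi :: "real^3^3 \<Rightarrow> real^3^3 \<Rightarrow> real" where
  "Psi R Rd = 2 - sqrt (1 + trace (transpose Rd ** R))"

definition eR :: "real^3^3 \<Rightarrow> real^3^3 \<Rightarrow> real^3" where
  "eR R Rd = (1 / (2 * sqrt (1 + trace (transpose Rd ** R))))
              *\<^sub>R vee (transpose Rd ** R - transpose R ** Rd)"

definition eOmega :: "real^3^3 \<Rightarrow> real^3 \<Rightarrow> real^3^3 \<Rightarrow> real^3 \<Rightarrow> real^3" where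
  "eOmega R Om Rd Omd = Om - (transpose R ** Rd) *v Omd"

definition sym_posdef :: "real^3^3 \<Rightarrow> bool" where
  "sym_posdef J \<longleftrightarrow> transpose J = J \<and> (\<forall>x. x \<noteq> 0 \<longrightarrow> x \<bullet> (J *v x) > 0)"

definition lambda_max :: "real^3^3 \<Rightarrow> real" where
  "lambda_max J = Max {l. \<exists>v. v \<noteq> 0 \<and> J *v v = l *\<^sub>R v}"

definition ctrl :: "real^3^3 \<Rightarrow> real \<Rightarrow> real \<Rightarrow> real^3^3 \<Rightarrow> real^3
                    \<Rightarrow> real^3^3 \<Rightarrow> real^3 \<Rightarrow> real^3 \<Rightarrow> real^3" where
  "ctrl J kR kO R Om Rd Omd dOmd =
     - kR *\<^sub>R eR R Rd - kO *\<^sub>R eOmega R Om Rd Omd + cross3 Om (J *v Om)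
     - J *v (hat Om *v ((transpose R ** Rd) *v Omd) - (transpose R ** Rd) *v dOmd)"

end

theory Submission
  imports Defs "HOL-Computational_Algebra.Polynomial"
begin


lemma hat_mv: "hat x *v y = cross3 x y"
  by (simp add: hat_def cross3_def vec_eq_iff forall_3 matrix_vector_mult_def sum_3 vector_def)

lemma tr_hat: "trace (Q ** hat e) = - (vee (Q - transpose Q) \<bullet> e)"
  by (simp add: hat_def vee_def trace_def sum_3 matrix_matrix_mult_def transpose_def inner_vec_def vector_def algebra_simps)

lemma vee_hat: "vee (Q ** hat e - transpose (Q ** hat e)) = trace Q *\<^sub>R e - transpose Q *v e"
  by (simp add: hat_def vee_def trace_def sum_3 matrix_matrix_mult_def transpose_def vec_eq_iff forall_3
       matrix_vector_mult_def vector_def algebra_simps)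

lemma hat_transpose: "transpose (hat x) = - hat x"
  by (simp add: hat_def transpose_def vec_eq_iff forall_3 vector_def)

lemma hat_diff: "hat (x - y) = hat x - hat y"
  by (simp add: hat_def vec_eq_iff forall_3 vector_def)

lemma rot_hat:
  fixes Q :: "real^3^3"
  assumes o: "transpose Q ** Q = mat 1" and d: "det Q = 1"
  shows "Q ** hat (transpose Q *v w) = hat w ** Q"
proof -
  have rot: "rotation_matrix Q" using o d by (simp add: rotation_matrix_def orthogonal_matrix)
  have o2: "Q ** transpose Q = mat 1" using o by (metis orthogonal_matrix orthogonal_matrix_def)
  have "(Q ** hat (transpose Q *v w)) *v x = (hat w ** Q) *v x" for x
  proof -
    have "(Q ** hat (transpose Q *v w)) *v x = Q *v cross3 (transpose Q *v w) x"
      by (simp add: matrix_vector_mul_assoc[symmetric] hat_mv)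
    also have "\<dots> = cross3 (Q *v (transpose Q *v w)) (Q *v x)"
      using cross_rotation_matrix[OF rot] by simp
    also have "Q *v (transpose Q *v w) = w" by (metis matrix_vector_mul_assoc o2 matrix_vector_mul_lid)
    finally show ?thesis by (simp add: matrix_vector_mul_assoc[symmetric] hat_mv)
  qed
  then show ?thesis by (simp add: matrix_eq)
qed

lemma bl_trace: "bounded_linear (trace :: real^3^3 \<Rightarrow> real)"
  by (rule linear_conv_bounded_linear[THEN iffD1]) (auto simp: linear_iff trace_def sum_3 algebra_simps)

lemma bl_vee: "bounded_linear vee"
  by (rule linear_conv_bounded_linear[THEN iffD1]) (auto simp: linear_iff vee_def vec_eq_iff forall_3 vector_def)

lemma bb_mm: "bounded_bilinear ((**) :: real^3^3 \<Rightarrow> real^3^3 \<Rightarrow> real^3^3)"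
  unfolding bilinear_conv_bounded_bilinear[symmetric] bilinear_def linear_iff
  by (auto simp: vec_eq_iff matrix_matrix_mult_def sum.distrib algebra_simps sum_distrib_left)

lemma bb_mv: "bounded_bilinear ((*v) :: real^3^3 \<Rightarrow> real^3 \<Rightarrow> real^3)"
  unfolding bilinear_conv_bounded_bilinear[symmetric] bilinear_def linear_iff
  by (auto simp: vec_eq_iff matrix_vector_mult_def sum.distrib algebra_simps sum_distrib_left)

lemma bl_tr: "bounded_linear (transpose :: real^3^3 \<Rightarrow> real^3^3)"
  by (rule linear_conv_bounded_linear[THEN iffD1]) (auto simp: linear_iff transpose_def vec_eq_iff)


lemma mm_diff_right: "(A::real^3^3) ** (B - C) = A ** B - A ** C"
  by (simp add: vec_eq_iff matrix_matrix_mult_def sum_subtractf algebra_simps)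

lemma mv_neg_left: "(- A::real^3^3) *v x = - (A *v x)"
  by (simp add: vec_eq_iff matrix_vector_mult_def sum_negf)

lemma mm_neg_left: "(- A::real^3^3) ** B = - (A ** B)"
  by (simp add: vec_eq_iff matrix_matrix_mult_def sum_negf)


lemma so3_comp:
  fixes Q :: "real^3^3"
  assumes o: "transpose Q ** Q = mat 1" and d: "det Q = 1"
  shows "Q$1$1*Q$1$1 + Q$2$1*Q$2$1 + Q$3$1*Q$3$1 = 1"
   "Q$1$2*Q$1$2 + Q$2$2*Q$2$2 + Q$3$2*Q$3$2 = 1"
   "Q$1$3*Q$1$3 + Q$2$3*Q$2$3 + Q$3$3*Q$3$3 = 1"
   "Q$1$1*Q$1$2 + Q$2$1*Q$2$2 + Q$3$1*Q$3$2 = 0"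
   "Q$1$1*Q$1$3 + Q$2$1*Q$2$3 + Q$3$1*Q$3$3 = 0"
   "Q$1$2*Q$1$3 + Q$2$2*Q$2$3 + Q$3$2*Q$3$3 = 0"
   "Q$1$1*Q$1$1 + Q$1$2*Q$1$2 + Q$1$3*Q$1$3 = 1"
   "Q$2$1*Q$2$1 + Q$2$2*Q$2$2 + Q$2$3*Q$2$3 = 1"
   "Q$3$1*Q$3$1 + Q$3$2*Q$3$2 + Q$3$3*Q$3$3 = 1"
   "Q$1$1*Q$2$1 + Q$1$2*Q$2$2 + Q$1$3*Q$2$3 = 0"
   "Q$1$1*Q$3$1 + Q$1$2*Q$3$2 + Q$1$3*Q$3$3 = 0"
   "Q$2$1*Q$3$1 + Q$2$2*Q$3$2 + Q$2$3*Q$3$3 = 0"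
   "Q$1$3 = Q$2$1*Q$3$2 - Q$3$1*Q$2$2"
   "Q$2$3 = Q$3$1*Q$1$2 - Q$1$1*Q$3$2"
   "Q$3$3 = Q$1$1*Q$2$2 - Q$2$1*Q$1$2"
   "Q$1$1 = Q$2$2*Q$3$3 - Q$3$2*Q$2$3"
   "Q$2$1 = Q$3$2*Q$1$3 - Q$1$2*Q$3$3"
   "Q$3$1 = Q$1$2*Q$2$3 - Q$2$2*Q$1$3"
   "Q$1$2 = Q$2$3*Q$3$1 - Q$3$3*Q$2$1"
   "Q$2$2 = Q$3$3*Q$1$1 - Q$1$3*Q$3$1"
   "Q$3$2 = Q$1$3*Q$2$1 - Q$2$3*Q$1$1"
proof -
  have o2: "Q ** transpose Q = mat 1" using o by (metis orthogonal_matrix orthogonal_matrix_def)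
  have rot: "rotation_matrix Q" using o d by (simp add: rotation_matrix_def orthogonal_matrix)
  have c: "cross3 (Q *v x) (Q *v y) = Q *v (cross3 x y)" for x y using cross_rotation_matrix[OF rot] .
  have c12: "cross3 (Q *v axis 1 1) (Q *v axis 2 1) = Q *v axis 3 1" using c[of "axis 1 1" "axis 2 1"] by (simp add: cross_basis)
  have c23: "cross3 (Q *v axis 2 1) (Q *v axis 3 1) = Q *v axis 1 1" using c[of "axis 2 1" "axis 3 1"] by (simp add: cross_basis)
  have c31: "cross3 (Q *v axis 3 1) (Q *v axis 1 1) = Q *v axis 2 1" using c[of "axis 3 1" "axis 1 1"] by (simp add: cross_basis)
  have oo: "\<And>i j. (transpose Q ** Q) $ i $ j = mat 1 $ i $ j" "\<And>i j. (Q ** transpose Q) $ i $ j = mat 1 $ i $ j"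
    using o o2 by simp_all
  note oo' = oo[unfolded matrix_matrix_mult_def transpose_def mat_def, simplified, unfolded sum_3]
  show "Q$1$1*Q$1$1 + Q$2$1*Q$2$1 + Q$3$1*Q$3$1 = 1"
   "Q$1$2*Q$1$2 + Q$2$2*Q$2$2 + Q$3$2*Q$3$2 = 1"
   "Q$1$3*Q$1$3 + Q$2$3*Q$2$3 + Q$3$3*Q$3$3 = 1"
   "Q$1$1*Q$1$2 + Q$2$1*Q$2$2 + Q$3$1*Q$3$2 = 0"
   "Q$1$1*Q$1$3 + Q$2$1*Q$2$3 + Q$3$1*Q$3$3 = 0"
   "Q$1$2*Q$1$3 + Q$2$2*Q$2$3 + Q$3$2*Q$3$3 = 0"
   "Q$1$1*Q$1$1 + Q$1$2*Q$1$2 + Q$1$3*Q$1$3 = 1"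
   "Q$2$1*Q$2$1 + Q$2$2*Q$2$2 + Q$2$3*Q$2$3 = 1"
   "Q$3$1*Q$3$1 + Q$3$2*Q$3$2 + Q$3$3*Q$3$3 = 1"
   "Q$1$1*Q$2$1 + Q$1$2*Q$2$2 + Q$1$3*Q$2$3 = 0"
   "Q$1$1*Q$3$1 + Q$1$2*Q$3$2 + Q$1$3*Q$3$3 = 0"
   "Q$2$1*Q$3$1 + Q$2$2*Q$3$2 + Q$2$3*Q$3$3 = 0"
    using oo'[of 1 1] oo'[of 2 2] oo'[of 3 3] oo'[of 1 2] oo'[of 1 3] oo'[of 2 3] by simp_all
  show "Q$1$3 = Q$2$1*Q$3$2 - Q$3$1*Q$2$2"
   "Q$2$3 = Q$3$1*Q$1$2 - Q$1$1*Q$3$2"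
   "Q$3$3 = Q$1$1*Q$2$2 - Q$2$1*Q$1$2"
    using c12 by (simp_all add: cross3_def vec_eq_iff forall_3 matrix_vector_mult_def sum_3 axis_def)
  show "Q$1$1 = Q$2$2*Q$3$3 - Q$3$2*Q$2$3"
   "Q$2$1 = Q$3$2*Q$1$3 - Q$1$2*Q$3$3"
   "Q$3$1 = Q$1$2*Q$2$3 - Q$2$2*Q$1$3"
    using c23 by (simp_all add: cross3_def vec_eq_iff forall_3 matrix_vector_mult_def sum_3 axis_def)
  show "Q$1$2 = Q$2$3*Q$3$1 - Q$3$3*Q$2$1"
   "Q$2$2 = Q$3$3*Q$1$1 - Q$1$3*Q$3$1"
   "Q$3$2 = Q$1$3*Q$2$1 - Q$2$3*Q$1$1"
    using c31 by (simp_all add: cross3_def vec_eq_iff forall_3 matrix_vector_mult_def sum_3 axis_def)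
qed


definition outer :: "real^3 \<Rightarrow> real^3^3" where "outer v = (\<chi> i j. v$i * v$j)"

lemma rodrigues:
  fixes Q :: "real^3^3"
  assumes o: "transpose Q ** Q = mat 1" and d: "det Q = 1"
  defines "v \<equiv> vee (Q - transpose Q)" and "s \<equiv> 1 + trace Q"
  shows "(2 * s) *\<^sub>R Q = ((s - 2) * s) *\<^sub>R mat 1 + outer v + s *\<^sub>R hat v"
proof -
  have sv: "s = 1 + Q$1$1 + Q$2$2 + Q$3$3" "v$1 = Q$3$2 - Q$2$3" "v$2 = Q$1$3 - Q$3$1" "v$3 = Q$2$1 - Q$1$2"
    unfolding s_def v_def by (simp_all add: trace_def sum_3 vee_def transpose_def)
  have r11: "2 * s * Q$1$1 = (s - 2) * s + v$1 * v$1 + s * (0)"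
    unfolding sv using so3_comp(2)[OF o d] so3_comp(3)[OF o d] so3_comp(7)[OF o d] so3_comp(16)[OF o d] by algebra
  have r12: "2 * s * Q$1$2 = 0 + v$1 * v$2 + s * (- v$3)"
    unfolding sv using so3_comp(4)[OF o d] so3_comp(10)[OF o d] so3_comp(17)[OF o d] so3_comp(19)[OF o d] by algebra
  have r13: "2 * s * Q$1$3 = 0 + v$1 * v$3 + s * (v$2)"
    unfolding sv using so3_comp(5)[OF o d] so3_comp(11)[OF o d] so3_comp(13)[OF o d] so3_comp(18)[OF o d] by algebra
  have r21: "2 * s * Q$2$1 = 0 + v$2 * v$1 + s * (v$3)"
    unfolding sv using so3_comp(4)[OF o d] so3_comp(10)[OF o d] so3_comp(17)[OF o d] so3_comp(19)[OF o d] by algebra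
  have r22: "2 * s * Q$2$2 = (s - 2) * s + v$2 * v$2 + s * (0)"
    unfolding sv using so3_comp(1)[OF o d] so3_comp(3)[OF o d] so3_comp(8)[OF o d] so3_comp(20)[OF o d] by algebra
  have r23: "2 * s * Q$2$3 = 0 + v$2 * v$3 + s * (- v$1)"
    unfolding sv using so3_comp(6)[OF o d] so3_comp(12)[OF o d] so3_comp(14)[OF o d] so3_comp(21)[OF o d] by algebra
  have r31: "2 * s * Q$3$1 = 0 + v$3 * v$1 + s * (- v$2)"
    unfolding sv using so3_comp(5)[OF o d] so3_comp(11)[OF o d] so3_comp(13)[OF o d] so3_comp(18)[OF o d] by algebra
  have r32: "2 * s * Q$3$2 = 0 + v$3 * v$2 + s * (v$1)"
    unfolding sv using so3_comp(6)[OF o d] so3_comp(12)[OF o d] so3_comp(14)[OF o d] so3_comp(21)[OF o d] by algebra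
  have r33: "2 * s * Q$3$3 = (s - 2) * s + v$3 * v$3 + s * (0)"
    unfolding sv using so3_comp(3)[OF o d] so3_comp(7)[OF o d] so3_comp(8)[OF o d] so3_comp(15)[OF o d] by algebra

  show ?thesis
    using r11 r12 r13 r21 r22 r23 r31 r32 r33
    by (simp add: vec_eq_iff forall_3 outer_def hat_def mat_def algebra_simps)
qed


lemma so3_norm_v:
  fixes Q :: "real^3^3"
  assumes o: "transpose Q ** Q = mat 1" and d: "det Q = 1"
  defines "v \<equiv> vee (Q - transpose Q)" and "s \<equiv> 1 + trace Q"
  shows "v \<bullet> v = s * (4 - s)"
proof -
  have R: "(2 * s) *\<^sub>R Q = ((s - 2) * s) *\<^sub>R mat 1 + outer v + s *\<^sub>R hat v"
    using rodrigues[OF o d] unfolding v_def s_def .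
  have "trace ((2 * s) *\<^sub>R Q) = trace (((s - 2) * s) *\<^sub>R mat 1 + outer v + s *\<^sub>R hat v)" using R by simp
  moreover have "trace Q = s - 1" unfolding s_def by simp
  ultimately show ?thesis
    apply (simp add: trace_def sum_3 outer_def hat_def mat_def inner_vec_def vector_def algebra_simps)
    by algebra
qed

lemma rod_vec:
  fixes Q :: "real^3^3"
  assumes o: "transpose Q ** Q = mat 1" and d: "det Q = 1"
  defines "v \<equiv> vee (Q - transpose Q)" and "s \<equiv> 1 + trace Q"
  shows "(2 * s) *\<^sub>R (transpose Q *v e) = ((s - 2) * s) *\<^sub>R e + (v \<bullet> e) *\<^sub>R v - s *\<^sub>R cross3 v e"
proof -
  have R: "(2 * s) *\<^sub>R Q = ((s - 2) * s) *\<^sub>R mat 1 + outer v + s *\<^sub>R hat v"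
    using rodrigues[OF o d] unfolding v_def s_def .
  have "transpose ((2 * s) *\<^sub>R Q) *v e = transpose (((s - 2) * s) *\<^sub>R mat 1 + outer v + s *\<^sub>R hat v) *v e"
    using R by simp
  then show ?thesis
    by (simp add: vec_eq_iff forall_3 transpose_def matrix_vector_mult_def sum_3 outer_def hat_def mat_def
         inner_vec_def cross3_def vector_def algebra_simps)
qed


lemma sym_inner: fixes J :: "real^3^3" assumes "transpose J = J" shows "x \<bullet> (J *v y) = (J *v x) \<bullet> y"
proof -
  have "x \<bullet> (J *v y) = (transpose J *v x) \<bullet> y"
    by (simp add: inner_vec_def matrix_vector_mult_def transpose_def sum_3 inner_real_def algebra_simps)
  then show ?thesis using assms by simp
qed

lemma eig_finite:
  fixes J :: "real^3^3"
  shows "finite {l. \<exists>v. v \<noteq> 0 \<and> J *v v = l *\<^sub>R v}"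
proof -
  define p where "p = [: det J, - (J$2$2*J$3$3 - J$2$3*J$3$2 + J$1$1*J$3$3 - J$1$3*J$3$1 + J$1$1*J$2$2 - J$1$2*J$2$1),
     J$1$1 + J$2$2 + J$3$3, -1 :: real :]"
  have p0: "p \<noteq> 0" unfolding p_def by simp
  have pe: "poly p l = det (J - mat l)" for l
    unfolding p_def by (simp add: det_3 mat_def algebra_simps)
  have "{l. \<exists>v. v \<noteq> 0 \<and> J *v v = l *\<^sub>R v} \<subseteq> {l. poly p l = 0}"
  proof
    fix l assume "l \<in> {l. \<exists>v. v \<noteq> 0 \<and> J *v v = l *\<^sub>R v}"
    then obtain v where v: "v \<noteq> 0" "J *v v = l *\<^sub>R v" by auto
    have A: "(J - mat l) *v v = 0"
      using v(2) by (simp add: vec_eq_iff matrix_vector_mult_def mat_def sum_3 forall_3 algebra_simps)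
    have "det (J - mat l) = 0"
    proof (rule ccontr)
      assume "det (J - mat l) \<noteq> 0"
      then have "invertible (J - mat l)" by (simp add: invertible_det_nz)
      then obtain B where B: "B ** (J - mat l) = mat 1" by (auto simp: invertible_left_inverse)
      have "v = (B ** (J - mat l)) *v v" using B by simp
      also have "\<dots> = 0" by (simp add: matrix_vector_mul_assoc[symmetric] A)
      finally show False using v(1) by simp
    qed
    then show "l \<in> {l. poly p l = 0}" by (simp add: pe)
  qed
  then show ?thesis using poly_roots_finite[OF p0] finite_subset by blast
qed

lemma J_bounds:
  fixes J :: "real^3^3"
  assumes J: "sym_posdef J"
  shows "\<exists>m>0. \<forall>x. m * (x \<bullet> x) \<le> x \<bullet> (J *v x)"
    and "\<forall>x. x \<bullet> (J *v x) \<le> lambda_max J * (x \<bullet> x)"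
    and "lambda_max J > 0"
proof -
  have sym: "transpose J = J" and pd: "\<And>x. x \<noteq> 0 \<Longrightarrow> x \<bullet> (J *v x) > 0" using J by (auto simp: sym_posdef_def)
  define f where "f x = x \<bullet> (J *v x)" for x :: "real^3"
  have cf: "continuous_on (sphere 0 1) f" unfolding f_def by (intro continuous_intros)
  have ne: "sphere (0::real^3) 1 \<noteq> {}" by (simp add: sphere_def) (metis norm_axis_1 dist_0_norm)
  have scale: "f (c *\<^sub>R x) = c * c * f x" for c x unfolding f_def
    by (simp add: matrix_vector_mult_scaleR algebra_simps)
  have sph: "\<And>x. x \<noteq> 0 \<Longrightarrow> (1 / norm x) *\<^sub>R x \<in> sphere 0 1" by (simp add: norm_sgn[unfolded sgn_div_norm] divide_inverse)
  have nx: "x \<bullet> x = norm x * norm x" for x :: "real^3" by (simp add: dot_square_norm power2_eq_square)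
  have ext: "f x = norm x * norm x * f ((1 / norm x) *\<^sub>R x)" if "x \<noteq> 0" for x
    using that by (simp add: scale)
  obtain u0 where u0: "u0 \<in> sphere 0 1" "\<And>y. y \<in> sphere 0 1 \<Longrightarrow> f u0 \<le> f y"
    using continuous_attains_inf[OF compact_sphere ne cf] by blast
  have "u0 \<noteq> 0" using u0(1) by auto
  then have m0: "f u0 > 0" using pd f_def by simp
  show "\<exists>m>0. \<forall>x. m * (x \<bullet> x) \<le> x \<bullet> (J *v x)"
  proof (intro exI[of _ "f u0"] conjI allI m0)
    fix x :: "real^3"
    show "f u0 * (x \<bullet> x) \<le> x \<bullet> (J *v x)"
    proof (cases "x = 0")
      case False
      have "f u0 \<le> f ((1 / norm x) *\<^sub>R x)" using u0(2) sph[OF False] by blast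
      then have "norm x * norm x * f u0 \<le> norm x * norm x * f ((1 / norm x) *\<^sub>R x)"
        by (simp add: mult_left_mono)
      then show ?thesis using ext[OF False] by (simp add: nx f_def mult.commute)
    qed simp
  qed
  obtain u where u: "u \<in> sphere 0 1" "\<And>y. y \<in> sphere 0 1 \<Longrightarrow> f y \<le> f u"
    using continuous_attains_sup[OF compact_sphere ne cf] by blast
  define mu where "mu = f u"
  have uu: "u \<bullet> u = 1" using u(1) by (simp add: nx)
  have bnd: "f x \<le> mu * (x \<bullet> x)" for x
  proof (cases "x = 0")
    case False
    have "f ((1 / norm x) *\<^sub>R x) \<le> mu" using u(2) sph[OF False] mu_def by blast
    then have "norm x * norm x * f ((1 / norm x) *\<^sub>R x) \<le> norm x * norm x * mu"
      by (simp add: mult_left_mono)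
    then show ?thesis using ext[OF False] by (simp add: nx mult.commute)
  qed (simp add: f_def)
  define g where "g = J *v u - mu *\<^sub>R u"
  define K where "K = f g - mu * (g \<bullet> g)"
  have key: "2 * \<epsilon> * (g \<bullet> g) + \<epsilon> * \<epsilon> * K \<le> 0" for \<epsilon>
  proof -
    have A: "f (u + \<epsilon> *\<^sub>R g) \<le> mu * ((u + \<epsilon> *\<^sub>R g) \<bullet> (u + \<epsilon> *\<^sub>R g))" by (rule bnd)
    have ug: "u \<bullet> g = g \<bullet> u" by (rule inner_commute)
    have B: "f (u + \<epsilon> *\<^sub>R g) = f u + 2 * \<epsilon> * (g \<bullet> (J *v u)) + \<epsilon> * \<epsilon> * f g"
      unfolding f_def using sym_inner[OF sym, of u g]
      by (simp add: matrix_vector_right_distrib inner_add_left inner_add_right algebra_simps inner_commute)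
    have C: "(u + \<epsilon> *\<^sub>R g) \<bullet> (u + \<epsilon> *\<^sub>R g) = u \<bullet> u + 2 * \<epsilon> * (g \<bullet> u) + \<epsilon> * \<epsilon> * (g \<bullet> g)"
      using ug by (simp add: inner_add_left inner_add_right algebra_simps)
    have D: "g \<bullet> (J *v u) = g \<bullet> g + mu * (g \<bullet> u)"
      unfolding g_def by (simp add: inner_diff_right algebra_simps)
    have E: "mu * (1 + 2 * \<epsilon> * (g \<bullet> u) + \<epsilon> * \<epsilon> * (g \<bullet> g)) = mu + 2 * \<epsilon> * (mu * (g \<bullet> u)) + \<epsilon> * \<epsilon> * (mu * (g \<bullet> g))"
      by (simp add: algebra_simps)
    have F: "2 * \<epsilon> * (g \<bullet> g + mu * (g \<bullet> u)) = 2 * \<epsilon> * (g \<bullet> g) + 2 * \<epsilon> * (mu * (g \<bullet> u))"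
      by (simp add: algebra_simps)
    have G: "\<epsilon> * \<epsilon> * K = \<epsilon> * \<epsilon> * f g - \<epsilon> * \<epsilon> * (mu * (g \<bullet> g))"
      unfolding K_def by (simp add: algebra_simps)
    show ?thesis using A B C D E F G uu mu_def by (simp only:)
  qed
  have g0: "g = 0"
  proof (rule ccontr)
    assume "g \<noteq> 0"
    then have gp: "g \<bullet> g > 0" by simp
    define \<epsilon> where "\<epsilon> = (g \<bullet> g) / (\<bar>K\<bar> + 1)"
    have ep: "\<epsilon> > 0" using gp by (simp add: \<epsilon>_def)
    have "2 * (g \<bullet> g) + \<epsilon> * K \<le> 0"
    proof -
      have "\<epsilon> * (2 * (g \<bullet> g) + \<epsilon> * K) \<le> 0" using key[of \<epsilon>] by (simp add: algebra_simps)
      then show ?thesis using ep by (simp add: mult_le_0_iff)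
    qed
    moreover have "\<epsilon> * \<bar>K\<bar> \<le> g \<bullet> g"
      unfolding \<epsilon>_def using gp by (simp add: field_simps)
    moreover have "- (\<epsilon> * \<bar>K\<bar>) \<le> \<epsilon> * K" 
    proof -
      have "\<epsilon> * (- K) \<le> \<epsilon> * \<bar>K\<bar>" by (rule mult_left_mono) (use ep in auto)
      then show ?thesis by simp
    qed
    ultimately show False using gp by linarith
  qed
  have eig: "mu \<in> {l. \<exists>v. v \<noteq> 0 \<and> J *v v = l *\<^sub>R v}"
    using g0 u(1) unfolding g_def by (auto intro!: exI[of _ u])
  have le: "mu \<le> lambda_max J" unfolding lambda_max_def
    using eig eig_finite[of J] by (simp add: Max_ge)
  show "\<forall>x. x \<bullet> (J *v x) \<le> lambda_max J * (x \<bullet> x)"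
  proof
    fix x :: "real^3"
    have "f x \<le> mu * (x \<bullet> x)" by (rule bnd)
    also have "\<dots> \<le> lambda_max J * (x \<bullet> x)" using le by (simp add: mult_right_mono)
    finally show "x \<bullet> (J *v x) \<le> lambda_max J * (x \<bullet> x)" by (simp add: f_def)
  qed
  have "u \<noteq> 0" using u(1) by auto
  then have "mu > 0" unfolding mu_def using pd f_def by auto
  then show "lambda_max J > 0" using le by simp
qed


lemma SO3_D: "R \<in> SO3 \<Longrightarrow> transpose R ** R = mat 1 \<and> det R = 1" by (simp add: SO3_def)

lemma Q_SO3:
  fixes R Rd :: "real^3^3"
  assumes "R \<in> SO3" "Rd \<in> SO3"
  shows "transpose (transpose Rd ** R) ** (transpose Rd ** R) = mat 1 \<and> det (transpose Rd ** R) = 1"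
proof -
  have o: "transpose R ** R = mat 1" "det R = 1" "transpose Rd ** Rd = mat 1" "det Rd = 1"
    using assms by (auto simp: SO3_def)
  have o2: "Rd ** transpose Rd = mat 1" using o(3) by (metis orthogonal_matrix orthogonal_matrix_def)
  have "transpose (transpose Rd ** R) ** (transpose Rd ** R) = transpose R ** (Rd ** transpose Rd) ** R"
    by (simp add: matrix_transpose_mul matrix_mul_assoc)
  also have "\<dots> = mat 1" using o o2 by (simp add: matrix_mul_rid)
  finally show ?thesis using o by (simp add: det_mul)
qed

lemma kin:
  fixes R Rd :: "real \<Rightarrow> real^3^3" and Om Omd dOm dOmd :: "real \<Rightarrow> real^3" and t :: real
  assumes SR: "R t \<in> SO3" and SRd: "Rd t \<in> SO3"
    and dRd: "(Rd has_vector_derivative (Rd t ** hat (Omd t))) (at t within S)"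
    and dOmd: "(Omd has_vector_derivative dOmd t) (at t within S)"
    and dR: "(R has_vector_derivative (R t ** hat (Om t))) (at t within S)"
    and dOm: "(Om has_vector_derivative dOm t) (at t within S)"
  shows "((\<lambda>t. transpose (Rd t) ** R t) has_vector_derivative ((transpose (Rd t) ** R t) ** hat (eOmega (R t) (Om t) (Rd t) (Omd t)))) (at t within S)"
    and "((\<lambda>t. eOmega (R t) (Om t) (Rd t) (Omd t)) has_vector_derivative
          (dOm t + hat (Om t) *v ((transpose (R t) ** Rd t) *v Omd t) - (transpose (R t) ** Rd t) *v dOmd t)) (at t within S)"
proof -
  let ?Q = "transpose (Rd t) ** R t"
  have QS: "transpose ?Q ** ?Q = mat 1" "det ?Q = 1" using Q_SO3[OF SR SRd] by auto
  have dRdT: "((\<lambda>t. transpose (Rd t)) has_vector_derivative transpose (Rd t ** hat (Omd t))) (at t within S)"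
    by (rule bounded_linear.has_vector_derivative[OF bl_tr dRd])
  have "((\<lambda>t. transpose (Rd t) ** R t) has_vector_derivative
      (transpose (Rd t) ** (R t ** hat (Om t)) + transpose (Rd t ** hat (Omd t)) ** R t)) (at t within S)"
    by (rule bounded_bilinear.has_vector_derivative[OF bb_mm dRdT dR])
  moreover have "transpose (Rd t) ** (R t ** hat (Om t)) + transpose (Rd t ** hat (Omd t)) ** R t
     = ?Q ** hat (eOmega (R t) (Om t) (Rd t) (Omd t))"
  proof -
    have tq: "transpose (R t) ** Rd t = transpose ?Q" by (simp add: matrix_transpose_mul)
    have "?Q ** hat (eOmega (R t) (Om t) (Rd t) (Omd t)) = ?Q ** hat (Om t) - ?Q ** hat (transpose ?Q *v Omd t)"
      unfolding eOmega_def tq hat_diff by (simp add: mm_diff_right)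
    also have "\<dots> = ?Q ** hat (Om t) - hat (Omd t) ** ?Q" using rot_hat[OF QS] by simp
    also have "\<dots> = transpose (Rd t) ** (R t ** hat (Om t)) + transpose (Rd t ** hat (Omd t)) ** R t"
      by (simp add: matrix_transpose_mul hat_transpose matrix_mul_assoc mm_neg_left)
    finally show ?thesis by simp
  qed
  ultimately show "((\<lambda>t. transpose (Rd t) ** R t) has_vector_derivative (?Q ** hat (eOmega (R t) (Om t) (Rd t) (Omd t)))) (at t within S)"
    by simp
  have dRT: "((\<lambda>t. transpose (R t)) has_vector_derivative transpose (R t ** hat (Om t))) (at t within S)"
    by (rule bounded_linear.has_vector_derivative[OF bl_tr dR])
  have dP: "((\<lambda>t. transpose (R t) ** Rd t) has_vector_derivative
      (transpose (R t) ** (Rd t ** hat (Omd t)) + transpose (R t ** hat (Om t)) ** Rd t)) (at t within S)"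
    by (rule bounded_bilinear.has_vector_derivative[OF bb_mm dRT dRd])
  have dPw: "((\<lambda>t. (transpose (R t) ** Rd t) *v Omd t) has_vector_derivative
     ((transpose (R t) ** Rd t) *v dOmd t + (transpose (R t) ** (Rd t ** hat (Omd t)) + transpose (R t ** hat (Om t)) ** Rd t) *v Omd t)) (at t within S)"
    by (rule bounded_bilinear.has_vector_derivative[OF bb_mv dP dOmd])
  have eq: "(transpose (R t) ** (Rd t ** hat (Omd t)) + transpose (R t ** hat (Om t)) ** Rd t) *v Omd t
      = - (hat (Om t) *v ((transpose (R t) ** Rd t) *v Omd t))"
    by (simp add: matrix_vector_mult_add_rdistrib matrix_vector_mul_assoc[symmetric] hat_mv matrix_transpose_mul
        hat_transpose matrix_mul_assoc mv_neg_left)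
  have "((\<lambda>t. Om t - (transpose (R t) ** Rd t) *v Omd t) has_vector_derivative
      (dOm t - ((transpose (R t) ** Rd t) *v dOmd t + (transpose (R t) ** (Rd t ** hat (Omd t)) + transpose (R t ** hat (Om t)) ** Rd t) *v Omd t))) (at t within S)"
    by (rule has_vector_derivative_diff[OF dOm dPw])
  then show "((\<lambda>t. eOmega (R t) (Om t) (Rd t) (Omd t)) has_vector_derivative
          (dOm t + hat (Om t) *v ((transpose (R t) ** Rd t) *v Omd t) - (transpose (R t) ** Rd t) *v dOmd t)) (at t within S)"
    unfolding eOmega_def eq by (simp add: algebra_simps)
qed


lemma eR_alg_comp:
  fixes r s a w e v c :: real
  assumes r: "r > 0" and s: "s = r * r"
    and rod: "2 * s * w = (s - 2) * s * e + a * v - s * c"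
  shows "1 / (2 * r) * ((s - 1) * e - w) + a / (4 * s * r) * v = r / 4 * e + 1 / (4 * r) * c"
proof -
  have sp: "s > 0" using r s by simp
  have L: "1 / (2 * r) * ((s - 1) * e - w) + a / (4 * s * r) * v = (2 * s * ((s - 1) * e - w) + a * v) / (4 * s * r)"
    using r sp by (simp add: field_simps)
  have Rr: "r / 4 * e + 1 / (4 * r) * c = (s * (r * r) * e + s * c) / (4 * s * r)"
    using r sp by (simp add: field_simps)
  have N: "2 * s * ((s - 1) * e - w) + a * v = s * (r * r) * e + s * c"
    using rod unfolding s by algebra
  show ?thesis unfolding L Rr N ..
qed

lemma eR_alg:
  fixes r s :: real and w e v :: "real^3"
  assumes r: "r > 0" and s: "s = r * r"
    and rod: "(2 * s) *\<^sub>R w = ((s - 2) * s) *\<^sub>R e + (v \<bullet> e) *\<^sub>R v - s *\<^sub>R cross3 v e"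
  shows "(1 / (2 * r)) *\<^sub>R ((s - 1) *\<^sub>R e - w) + ((v \<bullet> e) / (4 * s * r)) *\<^sub>R v
         = (r / 4) *\<^sub>R e + (1 / (4 * r)) *\<^sub>R cross3 v e"
proof -
  have "\<And>i. 2 * s * w$i = (s - 2) * s * e$i + (v \<bullet> e) * v$i - s * (cross3 v e)$i"
    using rod by (simp add: vec_eq_iff)
  then show ?thesis using eR_alg_comp[OF r s] by (simp add: vec_eq_iff)
qed

lemma norm_D:
  fixes r :: real and v e :: "real^3"
  assumes r: "r > 0" "r \<le> 2" and vv: "v \<bullet> v = r * r * (4 - r * r)"
  shows "norm ((r / 4) *\<^sub>R e + (1 / (4 * r)) *\<^sub>R cross3 v e) \<le> norm e"
proof -
  have nv: "norm v \<le> 2 * r"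
  proof -
    have "norm v ^ 2 = v \<bullet> v" by (simp add: power2_norm_eq_inner)
    also have "\<dots> \<le> (2 * r) ^ 2"
    proof -
      have "r * (r * (r * r)) \<ge> 0" using r by simp
      then show ?thesis using vv by (simp add: power2_eq_square algebra_simps)
    qed
    finally have "norm v ^ 2 \<le> (2 * r) ^ 2" .
    then show ?thesis by (rule power2_le_imp_le) (use r in auto)
  qed
  have nc: "norm (cross3 v e) \<le> norm v * norm e"
  proof -
    have "norm (cross3 v e) ^ 2 \<le> (norm v * norm e) ^ 2" using norm_cross_dot[of v e] zero_le_power2[of "v \<bullet> e"] by linarith
    then show ?thesis by (rule power2_le_imp_le) simp
  qed
  have "norm ((r / 4) *\<^sub>R e + (1 / (4 * r)) *\<^sub>R cross3 v e) \<le> r / 4 * norm e + 1 / (4 * r) * norm (cross3 v e)"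
    using r by (simp add: norm_triangle_le)
  also have "\<dots> \<le> r / 4 * norm e + 1 / (4 * r) * (2 * r * norm e)"
  proof -
    have "norm (cross3 v e) \<le> 2 * r * norm e" using nc mult_right_mono[OF nv norm_ge_zero[of e]] by linarith
    then have "1 / (4 * r) * norm (cross3 v e) \<le> 1 / (4 * r) * (2 * r * norm e)"
      by (rule mult_left_mono) (use r in auto)
    then show ?thesis by linarith
  qed
  also have "\<dots> \<le> norm e"
  proof -
    have "1 / (4 * r) * (2 * r * norm e) = norm e / 2" using r by simp
    moreover have "r / 4 * norm e \<le> norm e / 2" using mult_right_mono[OF r(2), of "norm e"] by simp
    ultimately show ?thesis by linarith
  qed
  finally show ?thesis .
qed

lemma inv_aux: "inverse (x::real) / 2 * - a = - a / (2 * x)"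
  by (simp add: inverse_eq_divide)

lemma deriv_eR:
  fixes s :: "real \<Rightarrow> real" and vf :: "real \<Rightarrow> real^3" and e w :: "real^3"
  assumes ds: "(s has_real_derivative - (vf t \<bullet> e)) (at t within S)"
    and dv: "(vf has_vector_derivative ((s t - 1) *\<^sub>R e - w)) (at t within S)"
    and sp: "s t > 0"
    and rod: "(2 * s t) *\<^sub>R w = ((s t - 2) * s t) *\<^sub>R e + (vf t \<bullet> e) *\<^sub>R vf t - s t *\<^sub>R cross3 (vf t) e"
  shows "((\<lambda>t. sqrt (s t)) has_real_derivative - (vf t \<bullet> e) / (2 * sqrt (s t))) (at t within S)"
    and "((\<lambda>t. (1 / (2 * sqrt (s t))) *\<^sub>R vf t) has_vector_derivative
           ((sqrt (s t) / 4) *\<^sub>R e + (1 / (4 * sqrt (s t))) *\<^sub>R cross3 (vf t) e)) (at t within S)"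
proof -
  define r where "r = sqrt (s t)"
  have r: "r > 0" "s t = r * r" using sp by (simp_all add: r_def)
  have dr: "((\<lambda>t. sqrt (s t)) has_real_derivative inverse (sqrt (s t)) / 2 * - (vf t \<bullet> e)) (at t within S)"
    by (rule DERIV_chain'[OF ds DERIV_real_sqrt[OF sp]])
  then show "((\<lambda>t. sqrt (s t)) has_real_derivative - (vf t \<bullet> e) / (2 * sqrt (s t))) (at t within S)"
    unfolding inv_aux .
  have d2r: "((\<lambda>t. 2 * sqrt (s t)) has_real_derivative 2 * (inverse (sqrt (s t)) / 2 * - (vf t \<bullet> e))) (at t within S)"
    by (rule DERIV_cmult[OF dr])
  have dinv: "((\<lambda>t. inverse (2 * sqrt (s t))) has_real_derivative
      - (inverse (2 * sqrt (s t)) * (2 * (inverse (sqrt (s t)) / 2 * - (vf t \<bullet> e))) * inverse (2 * sqrt (s t)))) (at t within S)"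
    by (rule DERIV_inverse'[OF d2r]) (use sp in simp)
  have dE: "((\<lambda>t. inverse (2 * sqrt (s t)) *\<^sub>R vf t) has_vector_derivative
     (inverse (2 * sqrt (s t)) *\<^sub>R ((s t - 1) *\<^sub>R e - w) +
      (- (inverse (2 * sqrt (s t)) * (2 * (inverse (sqrt (s t)) / 2 * - (vf t \<bullet> e))) * inverse (2 * sqrt (s t)))) *\<^sub>R vf t)) (at t within S)"
    by (rule has_vector_derivative_scaleR[OF dinv dv])
  have c1: "inverse (2 * sqrt (s t)) = 1 / (2 * r)" unfolding r_def by (simp add: inverse_eq_divide)
  have c2: "- (inverse (2 * sqrt (s t)) * (2 * (inverse (sqrt (s t)) / 2 * - (vf t \<bullet> e))) * inverse (2 * sqrt (s t)))
      = (vf t \<bullet> e) / (4 * s t * r)"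
    unfolding r_def[symmetric] r(2) using r(1) by (simp add: field_simps)
  have eq: "inverse (2 * sqrt (s t)) *\<^sub>R ((s t - 1) *\<^sub>R e - w) +
      (- (inverse (2 * sqrt (s t)) * (2 * (inverse (sqrt (s t)) / 2 * - (vf t \<bullet> e))) * inverse (2 * sqrt (s t)))) *\<^sub>R vf t
     = (1 / (2 * r)) *\<^sub>R ((s t - 1) *\<^sub>R e - w) + ((vf t \<bullet> e) / (4 * s t * r)) *\<^sub>R vf t"
    by (simp only: c2) (simp only: c1)
  have X: "((\<lambda>t. inverse (2 * sqrt (s t)) *\<^sub>R vf t) has_vector_derivative ((r / 4) *\<^sub>R e + (1 / (4 * r)) *\<^sub>R cross3 (vf t) e)) (at t within S)"
    using dE unfolding eq eR_alg[OF r rod] .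
  have fe: "(\<lambda>t. (1 / (2 * sqrt (s t))) *\<^sub>R vf t) = (\<lambda>t. inverse (2 * sqrt (s t)) *\<^sub>R vf t)"
    by (simp add: inverse_eq_divide)
  show "((\<lambda>t. (1 / (2 * sqrt (s t))) *\<^sub>R vf t) has_vector_derivative
           ((sqrt (s t) / 4) *\<^sub>R e + (1 / (4 * sqrt (s t))) *\<^sub>R cross3 (vf t) e)) (at t within S)"
    using X unfolding fe r_def .
qed


lemma amgm: "2 * (a * b) \<le> a * a + b * (b::real)"
  using sum_squares_ge_zero[of "a - b" 0] by (simp add: algebra_simps power2_eq_square)
  
lemma R1:
  fixes a b x y kR kO M c :: real
  assumes pos: "a \<ge> 0" "b \<ge> 0" "kR > 0" "kO > 0" "M > 0" "c > 0"
    and x: "\<bar>x\<bar> \<le> a * b" and y: "\<bar>y\<bar> \<le> M * (b * b)"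
    and cc: "c * (kO^2 / (2 * kR) + M) \<le> kO / 2"
  shows "- kO * (b * b) - c * kR * (a * a) - c * kO * x + c * y \<le> - min (c * kR / 2) (kO / 2) * (a * a + b * b)"
proof -
  have "kO * (a * b) \<le> kR / 2 * (a * a) + kO^2 / (2 * kR) * (b * b)"
  proof -
    have "kR / 2 * (a * a) + kO^2 / (2 * kR) * (b * b) - kO * (a * b) = (kR * a - kO * b)^2 / (2 * kR)"
      using pos by (simp add: field_simps power2_eq_square)
    moreover have "(kR * a - kO * b)^2 / (2 * kR) \<ge> 0" using pos by simp
    ultimately show ?thesis by linarith
  qed
  moreover have "- x \<le> a * b" using x by linarith
  then have "- c * kO * x \<le> c * (kO * (a * b))" using pos
    by (metis minus_mult_left mult.assoc mult_left_mono mult_nonneg_nonneg less_imp_le mult_minus_right)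
  moreover have "c * y \<le> c * (M * (b * b))" using y pos by (simp add: abs_le_iff mult_left_mono)
  moreover have "c * (kO^2 / (2 * kR) * (b * b)) + c * (M * (b * b)) \<le> kO / 2 * (b * b)"
  proof -
    have "c * (kO^2 / (2 * kR)) * (b * b) + c * M * (b * b) = c * (kO^2 / (2 * kR) + M) * (b * b)" by (simp add: algebra_simps)
    also have "\<dots> \<le> kO / 2 * (b * b)" using mult_right_mono[OF cc, of "b*b"] by simp
    finally show ?thesis by (simp add: algebra_simps)
  qed
  moreover have "min (c * kR / 2) (kO / 2) * (a * a + b * b) \<le> c * kR / 2 * (a * a) + kO / 2 * (b * b)"
  proof -
    have "min (c * kR / 2) (kO / 2) * (a * a) \<le> c * kR / 2 * (a * a)" by (rule mult_right_mono) auto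
    moreover have "min (c * kR / 2) (kO / 2) * (b * b) \<le> kO / 2 * (b * b)" by (rule mult_right_mono) auto
    ultimately show ?thesis by (simp add: algebra_simps)
  qed
  moreover have "c * (kO * (a * b)) \<le> c * (kR / 2 * (a * a) + kO^2 / (2 * kR) * (b * b))"
    using calculation(1) pos by (simp add: mult_left_mono)
  ultimately show ?thesis by (simp add: algebra_simps)
qed

lemma R2:
  fixes a b p q z kR M c m1 :: real
  assumes pos: "a \<ge> 0" "b \<ge> 0" "kR > 0" "M > 0" "c > 0" "m1 > 0"
    and p: "a * a \<le> p" and q: "m1 * (b * b) \<le> q" and z: "\<bar>z\<bar> \<le> M * (a * b)"
    and cM: "c * M \<le> m1 / 4" "c * M \<le> kR / 2"
  shows "min (m1 / 4) (kR / 2) * (a * a + b * b) \<le> q / 2 + kR * p + c * z"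
proof -
  have "c * (- z) \<le> c * (M * (a * b))" using z pos by (intro mult_left_mono) auto
  then have "- (c * z) \<le> c * (M * (a * b))" by simp
  also have "\<dots> = (c * M) * (a * b)" by simp
  also have "\<dots> \<le> (c * M) * ((a * a + b * b) / 2)" using amgm[of a b] pos by (intro mult_left_mono) auto
  finally have 1: "- (c * z) \<le> (c * M) * ((a * a + b * b) / 2)" .
  have 2: "(c * M) * ((a * a + b * b) / 2) \<le> m1 / 8 * (b * b) + kR / 4 * (a * a)"
  proof -
    have "(c * M) * (b * b) \<le> m1 / 4 * (b * b)" using mult_right_mono[OF cM(1), of "b*b"] by simp
    moreover have "(c * M) * (a * a) \<le> kR / 2 * (a * a)" using mult_right_mono[OF cM(2), of "a*a"] by simp
    ultimately show ?thesis by (simp add: algebra_simps)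
  qed
  have 3: "kR * (a * a) \<le> kR * p" using p pos by simp
  have 4: "min (m1 / 4) (kR / 2) * (a * a + b * b) \<le> kR / 2 * (a * a) + m1 / 4 * (b * b)"
  proof -
    have "min (m1 / 4) (kR / 2) * (a * a) \<le> kR / 2 * (a * a)" by (rule mult_right_mono) auto
    moreover have "min (m1 / 4) (kR / 2) * (b * b) \<le> m1 / 4 * (b * b)" by (rule mult_right_mono) auto
    ultimately show ?thesis by (simp add: algebra_simps)
  qed
  have 5: "kR * (a * a) \<ge> 0" "m1 * (b * b) \<ge> 0" using pos by simp_all
  show ?thesis using 1 2 3 4 5 q by (simp add: algebra_simps)
qed

lemma R3:
  fixes a b p q z kR M c :: real
  assumes pos: "a \<ge> 0" "b \<ge> 0" "kR > 0" "M > 0" "c > 0"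
    and p: "p \<le> 2 * (a * a)" and q: "q \<le> M * (b * b)" and z: "\<bar>z\<bar> \<le> M * (a * b)"
  shows "q / 2 + kR * p + c * z \<le> (M / 2 + 2 * kR + c * M) * (a * a + b * b)"
proof -
  have "c * z \<le> c * (M * (a * b))" using z pos by (intro mult_left_mono) auto
  also have "\<dots> = (c * M) * (a * b)" by simp
  also have "\<dots> \<le> (c * M) * (a * a + b * b)"
  proof -
    have "a * b \<ge> 0" using pos by simp
    then have "a * b \<le> a * a + b * b" using amgm[of a b] by linarith
    then show ?thesis using pos by (intro mult_left_mono) auto
  qed
  finally have 1: "c * z \<le> (c * M) * (a * a + b * b)" .
  have 2: "kR * p \<le> 2 * kR * (a * a)" using p pos by (simp add: mult_left_mono)
  have 3: "M / 2 * (b * b) \<le> M / 2 * (a * a + b * b)" using pos by (simp add: mult_left_mono)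
  have 4: "2 * kR * (a * a) \<le> 2 * kR * (a * a + b * b)" using pos by (simp add: mult_left_mono)
  show ?thesis using 1 2 3 4 q by (simp add: algebra_simps)
qed


lemma R4:
  fixes r :: real assumes "0 < r" "r \<le> 2"
  shows "(4 - r * r) / 4 \<le> 2 - r" "2 - r \<le> 2 * ((4 - r * r) / 4)"
proof -
  have "(2 - r) * (2 - r) \<ge> 0" by simp
  then have h: "4 - r * r \<le> 4 * (2 - r)" by (simp add: algebra_simps)
  then show "(4 - r * r) / 4 \<le> 2 - r" by simp
  have "r * (2 - r) \<ge> 0" using assms by simp
  then have h2: "4 * (2 - r) \<le> 2 * (4 - r * r)" by (simp add: algebra_simps)
  then show "2 - r \<le> 2 * ((4 - r * r) / 4)" by simp
qed

lemma decr_on: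
  fixes V V' :: "real \<Rightarrow> real"
  assumes T: "0 \<le> T" and cont: "continuous_on {0..} V"
   and d: "\<And>x. 0 < x \<Longrightarrow> x < T \<Longrightarrow> (V has_real_derivative V' x) (at x within {0..})"
   and n: "\<And>x. 0 < x \<Longrightarrow> x < T \<Longrightarrow> V' x \<le> 0"
  shows "V T \<le> V 0"
proof -
  have c2: "continuous_on {0..T} V" using cont by (rule continuous_on_subset) auto
  show ?thesis
  proof (rule DERIV_nonpos_imp_decreasing_open[OF T _ c2])
    fix x assume x: "0 < x" "x < T"
    have "at x within {0..} = at x" using x by (intro at_within_interior) auto
    then have "(V has_real_derivative V' x) (at x)" using d[OF x] by simp
    then show "\<exists>y. (V has_real_derivative y) (at x) \<and> y \<le> 0" using n[OF x] by blast
  qed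
qed

lemma traj:
  fixes J :: "real^3^3" and kR kO m1 M c :: real
    and Rd R :: "real \<Rightarrow> real^3^3" and Omd dOmd Om dOm :: "real \<Rightarrow> real^3"
  assumes sym: "transpose J = J"
    and m1: "m1 > 0" "\<And>x. m1 * (x \<bullet> x) \<le> x \<bullet> (J *v x)"
    and M: "M > 0" "\<And>x. norm (J *v x) \<le> M * norm x"
    and lm: "\<And>x. x \<bullet> (J *v x) \<le> lambda_max J * (x \<bullet> x)" "lambda_max J > 0"
    and kR: "kR > 0" and kO: "kO > 0"
    and c: "c > 0" "c * (kO^2 / (2 * kR) + M) \<le> kO / 2" "c * M \<le> m1 / 4" "c * M \<le> kR / 2"
    and SRd: "\<forall>t\<ge>0. Rd t \<in> SO3"
    and dRd: "\<forall>t\<ge>0. (Rd has_vector_derivative (Rd t ** hat (Omd t))) (at t within {0..})"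
    and dOmd: "\<forall>t\<ge>0. (Omd has_vector_derivative dOmd t) (at t within {0..})"
    and SR: "\<forall>t\<ge>0. R t \<in> SO3"
    and dR: "\<forall>t\<ge>0. (R has_vector_derivative (R t ** hat (Om t))) (at t within {0..})"
    and dOm: "\<forall>t\<ge>0. (Om has_vector_derivative dOm t) (at t within {0..})"
    and ode: "\<forall>t\<ge>0. J *v dOm t + cross3 (Om t) (J *v Om t) = ctrl J kR kO (R t) (Om t) (Rd t) (Omd t) (dOmd t)"
    and psi0: "Psi (R 0) (Rd 0) < 2"
    and e0: "norm (eOmega (R 0) (Om 0) (Rd 0) (Omd 0)) ^ 2 < 2 * kR / lambda_max J * (2 - Psi (R 0) (Rd 0))"
  shows "(\<forall>t\<ge>0. Psi (R t) (Rd t) < 2) \<and>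
      (\<forall>t\<ge>0. norm (eR (R t) (Rd t)) ^ 2 + norm (eOmega (R t) (Om t) (Rd t) (Omd t)) ^ 2
         \<le> ((M / 2 + 2 * kR + c * M) / min (m1 / 4) (kR / 2)) * (norm (eR (R 0) (Rd 0)) ^ 2 + norm (eOmega (R 0) (Om 0) (Rd 0) (Omd 0)) ^ 2)
             * exp (- (min (c * kR / 2) (kO / 2) / (M / 2 + 2 * kR + c * M)) * t))"
proof -
  define Q where "Q = (\<lambda>t. transpose (Rd t) ** R t)"
  define e where "e = (\<lambda>t. eOmega (R t) (Om t) (Rd t) (Omd t))"
  define s where "s = (\<lambda>t. 1 + trace (Q t))"
  define vf where "vf = (\<lambda>t. vee (Q t - transpose (Q t)))"
  define E where "E = (\<lambda>t. eR (R t) (Rd t))"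
  define de where "de = (\<lambda>t. dOm t + hat (Om t) *v ((transpose (R t) ** Rd t) *v Omd t) - (transpose (R t) ** Rd t) *v dOmd t)"
  let ?S = "{0::real..}"
  have QS: "transpose (Q t) ** Q t = mat 1" "det (Q t) = 1" if "t \<ge> 0" for t
    using Q_SO3[OF SR[rule_format, OF that] SRd[rule_format, OF that]] unfolding Q_def by auto
  have dQ: "(Q has_vector_derivative Q t ** hat (e t)) (at t within ?S)" if "t \<ge> 0" for t
    using kin(1)[where R=R and Rd=Rd and Om=Om and Omd=Omd and dOm=dOm and dOmd=dOmd and t=t and S="{0::real..}", OF SR[rule_format, OF that] SRd[rule_format, OF that] dRd[rule_format, OF that] dOmd[rule_format, OF that] dR[rule_format, OF that] dOm[rule_format, OF that]] unfolding Q_def e_def by simp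
  have de: "(e has_vector_derivative de t) (at t within ?S)" if "t \<ge> 0" for t
    using kin(2)[where R=R and Rd=Rd and Om=Om and Omd=Omd and dOm=dOm and dOmd=dOmd and t=t and S="{0::real..}", OF SR[rule_format, OF that] SRd[rule_format, OF that] dRd[rule_format, OF that] dOmd[rule_format, OF that] dR[rule_format, OF that] dOm[rule_format, OF that]] unfolding e_def de_def by simp
  have Jde: "J *v de t = - kR *\<^sub>R E t - kO *\<^sub>R e t" if "t \<ge> 0" for t
  proof -
    have o: "J *v dOm t = ctrl J kR kO (R t) (Om t) (Rd t) (Omd t) (dOmd t) - cross3 (Om t) (J *v Om t)"
      using ode[rule_format, OF that] by (simp add: algebra_simps)
    show ?thesis unfolding de_def E_def e_def
      by (simp add: o ctrl_def matrix_vector_right_distrib matrix_vector_mult_diff_distrib algebra_simps)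
  qed
  have Eeq: "E t = (1 / (2 * sqrt (s t))) *\<^sub>R vf t" for t
    unfolding E_def eR_def s_def vf_def Q_def by (simp add: matrix_transpose_mul)
  have Ef: "E = (\<lambda>t. (1 / (2 * sqrt (s t))) *\<^sub>R vf t)" using Eeq by auto
  have Psieq: "Psi (R t) (Rd t) = 2 - sqrt (s t)" for t
    unfolding Psi_def s_def Q_def by simp
  have ds: "(s has_real_derivative - (vf t \<bullet> e t)) (at t within ?S)" if "t \<ge> 0" for t
  proof -
    have "((\<lambda>t. trace (Q t)) has_vector_derivative trace (Q t ** hat (e t))) (at t within ?S)"
      by (rule bounded_linear.has_vector_derivative[OF bl_trace dQ[OF that]])
    then have "((\<lambda>t. 1 + trace (Q t)) has_vector_derivative 0 + trace (Q t ** hat (e t))) (at t within ?S)"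
      by (rule has_vector_derivative_add[OF has_vector_derivative_const])
    then show ?thesis unfolding s_def vf_def has_real_derivative_iff_has_vector_derivative tr_hat by simp
  qed
  have dv: "(vf has_vector_derivative ((s t - 1) *\<^sub>R e t - transpose (Q t) *v e t)) (at t within ?S)" if "t \<ge> 0" for t
  proof -
    have dT: "((\<lambda>t. transpose (Q t)) has_vector_derivative transpose (Q t ** hat (e t))) (at t within ?S)"
      by (rule bounded_linear.has_vector_derivative[OF bl_tr dQ[OF that]])
    have "((\<lambda>t. Q t - transpose (Q t)) has_vector_derivative (Q t ** hat (e t) - transpose (Q t ** hat (e t)))) (at t within ?S)"
      by (rule has_vector_derivative_diff[OF dQ[OF that] dT])
    then have "((\<lambda>t. vee (Q t - transpose (Q t))) has_vector_derivative vee (Q t ** hat (e t) - transpose (Q t ** hat (e t)))) (at t within ?S)"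
      by (rule bounded_linear.has_vector_derivative[OF bl_vee])
    then show ?thesis unfolding vee_hat vf_def s_def by simp
  qed
  have rod: "(2 * s t) *\<^sub>R (transpose (Q t) *v e t) = ((s t - 2) * s t) *\<^sub>R e t + (vf t \<bullet> e t) *\<^sub>R vf t - s t *\<^sub>R cross3 (vf t) (e t)"
    if "t \<ge> 0" for t
    using rod_vec[OF QS[OF that]] unfolding s_def vf_def .
  have normv: "vf t \<bullet> vf t = s t * (4 - s t)" if "t \<ge> 0" for t
    using so3_norm_v[OF QS[OF that]] unfolding s_def vf_def .
  have blJ: "bounded_linear (\<lambda>x. J *v x)" by (rule bounded_bilinear.bounded_linear_right[OF bb_mv])
  have dJe: "((\<lambda>t. J *v e t) has_vector_derivative J *v de t) (at t within ?S)" if "t \<ge> 0" for t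
    by (rule bounded_linear.has_vector_derivative[OF blJ de[OF that]])
  have ce: "continuous_on ?S e"
    using de by (auto simp: continuous_on_eq_continuous_within intro: has_vector_derivative_continuous)
  have cJe: "continuous_on ?S (\<lambda>t. J *v e t)"
    using dJe by (auto simp: continuous_on_eq_continuous_within intro: has_vector_derivative_continuous)
  have cs: "continuous_on ?S s"
    using ds by (auto simp: continuous_on_eq_continuous_within intro: DERIV_continuous)
  have dq: "((\<lambda>t. e t \<bullet> (J *v e t)) has_real_derivative - 2 * kR * (e t \<bullet> E t) - 2 * kO * (e t \<bullet> e t)) (at t within ?S)"
    if "t \<ge> 0" for t
  proof -
    have "((\<lambda>t. e t \<bullet> (J *v e t)) has_vector_derivative (e t \<bullet> (J *v de t) + de t \<bullet> (J *v e t))) (at t within ?S)"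
      by (rule bounded_bilinear.has_vector_derivative[OF bounded_bilinear_inner de[OF that] dJe[OF that]])
    moreover have "de t \<bullet> (J *v e t) = e t \<bullet> (J *v de t)"
      using sym_inner[OF sym, of "de t" "e t"] by (simp add: inner_commute)
    ultimately show ?thesis using Jde[OF that]
      by (simp add: has_real_derivative_iff_has_vector_derivative inner_diff_right algebra_simps)
  qed
  have qpos: "e t \<bullet> (J *v e t) \<ge> 0" for t
    using m1(2)[of "e t"] m1(1) by (smt (verit) inner_ge_zero mult_nonneg_nonneg)
  have s0: "s 0 > 0" using psi0 unfolding Psieq by (smt (verit) real_sqrt_le_0_iff)
  define V where "V = (\<lambda>t. e t \<bullet> (J *v e t) / 2 + kR * (2 - sqrt (s t)))"
  have cV: "continuous_on ?S V" unfolding V_def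
    by (intro continuous_intros ce cJe cs) auto
  have dV: "(V has_real_derivative - kO * (e t \<bullet> e t)) (at t within ?S)" if "t \<ge> 0" "s t > 0" for t
  proof -
    have dr: "((\<lambda>t. sqrt (s t)) has_real_derivative - (vf t \<bullet> e t) / (2 * sqrt (s t))) (at t within ?S)"
      by (rule deriv_eR(1)[OF ds[OF that(1)] dv[OF that(1)] that(2) rod[OF that(1)]])
    have "(V has_real_derivative (- 2 * kR * (e t \<bullet> E t) - 2 * kO * (e t \<bullet> e t)) / 2 + kR * (0 - - (vf t \<bullet> e t) / (2 * sqrt (s t)))) (at t within ?S)"
      unfolding V_def
      by (intro DERIV_add DERIV_cdivide DERIV_cmult DERIV_diff DERIV_const dq[OF that(1)] dr)
    moreover have "(- 2 * kR * (e t \<bullet> E t) - 2 * kO * (e t \<bullet> e t)) / 2 + kR * (0 - - (vf t \<bullet> e t) / (2 * sqrt (s t)))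
       = - kO * (e t \<bullet> e t)"
    proof -
      have "(vf t \<bullet> e t) / (2 * sqrt (s t)) = e t \<bullet> E t"
        unfolding Eeq by (simp add: inner_commute)
      then show ?thesis by (simp add: minus_divide_left[symmetric] field_simps)
    qed
    ultimately show ?thesis by simp
  qed
  have V0: "V 0 < 2 * kR"
  proof -
    have "norm (e 0) ^ 2 < 2 * kR / lambda_max J * sqrt (s 0)" using e0 unfolding e_def Psieq by simp
    then have "lambda_max J * (e 0 \<bullet> e 0) < 2 * kR * sqrt (s 0)"
      using lm(2) by (simp add: power2_norm_eq_inner field_simps)
    moreover have "e 0 \<bullet> (J *v e 0) \<le> lambda_max J * (e 0 \<bullet> e 0)" by (rule lm(1))
    ultimately show ?thesis unfolding V_def by (simp add: algebra_simps)
  qed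
  have spos: "s t > 0" if "t \<ge> 0" for t
  proof (rule ccontr)
    assume "\<not> s t > 0"
    then have st: "s t \<le> 0" by simp
    define K where "K = {0..t} \<inter> s -` {..0}"
    have cK: "compact K"
    proof -
      have "closed K" unfolding K_def
        by (rule continuous_closed_preimage[OF continuous_on_subset[OF cs]]) auto
      moreover have "bounded K" unfolding K_def by (rule bounded_subset[of "{0..t}"]) auto
      ultimately show ?thesis by (simp add: compact_eq_bounded_closed)
    qed
    have neK: "K \<noteq> {}" using st that unfolding K_def by auto
    obtain T where T: "T \<in> K" "\<And>y. y \<in> K \<Longrightarrow> T \<le> y"
      using continuous_attains_inf[OF cK neK continuous_on_id] by auto
    have T0: "T \<ge> 0" "T \<le> t" "s T \<le> 0" using T(1) unfolding K_def by auto
    have pos_before: "s x > 0" if "0 \<le> x" "x < T" for x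
    proof (rule ccontr)
      assume "\<not> s x > 0"
      then have "x \<in> K" using that T0 unfolding K_def by auto
      then show False using T(2) that by force
    qed
    have "V T \<le> V 0"
    proof (rule decr_on[OF T0(1) cV])
      fix x assume x: "0 < x" "x < T"
      show "(V has_real_derivative - kO * (e x \<bullet> e x)) (at x within ?S)"
        using dV[of x] pos_before[of x] x by simp
      show "- kO * (e x \<bullet> e x) \<le> 0" using kO by simp
    qed
    moreover have "V T \<ge> 2 * kR"
    proof -
      have "sqrt (s T) \<le> 0" using T0 by simp
      then have "kR * sqrt (s T) \<le> 0" using kR by (simp add: mult_nonneg_nonpos)
      then show ?thesis unfolding V_def using qpos[of T] by (simp add: algebra_simps)
    qed
    ultimately show False using V0 by simp
  qed
  have part1: "\<forall>t\<ge>0. Psi (R t) (Rd t) < 2" using spos unfolding Psieq by simp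
  define a1 where "a1 = min (m1 / 4) (kR / 2)"
  define a2 where "a2 = M / 2 + 2 * kR + c * M"
  define a3 where "a3 = min (c * kR / 2) (kO / 2)"
  define \<beta> where "\<beta> = a3 / a2"
  have a1p: "a1 > 0" unfolding a1_def using m1 kR by simp
  have a2p: "a2 > 0" unfolding a2_def using M kR c by (simp add: add_pos_pos)
  have a3p: "a3 > 0" unfolding a3_def using c kR kO by simp
  have bp: "\<beta> > 0" unfolding \<beta>_def using a2p a3p by simp
  define D where "D = (\<lambda>t. (sqrt (s t) / 4) *\<^sub>R e t + (1 / (4 * sqrt (s t))) *\<^sub>R cross3 (vf t) (e t))"
  have dE: "(E has_vector_derivative D t) (at t within ?S)" if "t \<ge> 0" for t
    unfolding Ef D_def by (rule deriv_eR(2)[OF ds[OF that] dv[OF that] spos[OF that] rod[OF that]])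
  have r2: "sqrt (s t) \<le> 2" if "t \<ge> 0" for t
  proof -
    have "0 \<le> vf t \<bullet> vf t" by simp
    then have "s t \<le> 4" using normv[OF that] spos[OF that] by (simp add: zero_le_mult_iff)
    then show ?thesis using real_sqrt_le_mono[of "s t" 4] by simp
  qed
  have rp: "sqrt (s t) > 0" if "t \<ge> 0" for t using spos[OF that] by simp
  have nD: "norm (D t) \<le> norm (e t)" if "t \<ge> 0" for t
    unfolding D_def
  proof (rule norm_D[OF rp[OF that] r2[OF that]])
    show "vf t \<bullet> vf t = sqrt (s t) * sqrt (s t) * (4 - sqrt (s t) * sqrt (s t))"
      using normv[OF that] spos[OF that] by simp
  qed
  have EE: "E t \<bullet> E t = (4 - sqrt (s t) * sqrt (s t)) / 4" if "t \<ge> 0" for t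
  proof -
    have "E t \<bullet> E t = (vf t \<bullet> vf t) / (4 * s t)" unfolding Eeq using spos[OF that] by (simp add: field_simps)
    also have "\<dots> = (s t * (4 - s t)) / (s t * 4)" using normv[OF that] by (simp add: mult.commute)
    also have "\<dots> = (4 - s t) / 4" using spos[OF that] by simp
    finally show ?thesis using spos[OF that] by simp
  qed
  have Psib: "E t \<bullet> E t \<le> 2 - sqrt (s t)" "2 - sqrt (s t) \<le> 2 * (E t \<bullet> E t)" if "t \<ge> 0" for t
    unfolding EE[OF that] using R4[OF rp[OF that] r2[OF that]] by auto
  define W where "W = (\<lambda>t. e t \<bullet> (J *v e t) / 2 + kR * (2 - sqrt (s t)) + c * (E t \<bullet> (J *v e t)))"
  have nJ: "norm (J *v x) \<le> M * norm x" for x by (rule M(2))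
  have ab: "norm x * norm x = x \<bullet> x" for x :: "real^3" by (simp add: dot_square_norm power2_eq_square)
  have CS: "\<bar>x \<bullet> (J *v y)\<bar> \<le> M * (norm x * norm y)" for x y
  proof -
    have "\<bar>x \<bullet> (J *v y)\<bar> \<le> norm x * norm (J *v y)" by (rule Cauchy_Schwarz_ineq2)
    also have "\<dots> \<le> norm x * (M * norm y)" by (rule mult_left_mono[OF nJ]) simp
    finally show ?thesis by (simp add: algebra_simps)
  qed
  have Wlow: "a1 * (E t \<bullet> E t + e t \<bullet> e t) \<le> W t" if "t \<ge> 0" for t
  proof -
    have "min (m1 / 4) (kR / 2) * (norm (E t) * norm (E t) + norm (e t) * norm (e t))
       \<le> e t \<bullet> (J *v e t) / 2 + kR * (2 - sqrt (s t)) + c * (E t \<bullet> (J *v e t))"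
      by (rule R2[OF norm_ge_zero norm_ge_zero kR M(1) c(1) m1(1) _ _ CS c(3) c(4)])
         (use Psib[OF that] m1(2)[of "e t"] in \<open>simp_all add: ab\<close>)
    then show ?thesis unfolding a1_def W_def ab .
  qed
  have Wup: "W t \<le> a2 * (E t \<bullet> E t + e t \<bullet> e t)" if "t \<ge> 0" for t
  proof -
    have q: "e t \<bullet> (J *v e t) \<le> M * (norm (e t) * norm (e t))" using CS[of "e t" "e t"] by simp
    have "e t \<bullet> (J *v e t) / 2 + kR * (2 - sqrt (s t)) + c * (E t \<bullet> (J *v e t))
       \<le> (M / 2 + 2 * kR + c * M) * (norm (E t) * norm (E t) + norm (e t) * norm (e t))"
      by (rule R3[OF norm_ge_zero norm_ge_zero kR M(1) c(1) _ q CS])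
         (use Psib[OF that] in \<open>simp add: ab\<close>)
    then show ?thesis unfolding a2_def W_def ab .
  qed
  have dEJ: "((\<lambda>t. E t \<bullet> (J *v e t)) has_real_derivative (E t \<bullet> (J *v de t) + D t \<bullet> (J *v e t))) (at t within ?S)"
    if "t \<ge> 0" for t
    using bounded_bilinear.has_vector_derivative[OF bounded_bilinear_inner dE[OF that] dJe[OF that]]
    by (simp add: has_real_derivative_iff_has_vector_derivative)
  define W' where "W' = (\<lambda>t. - kO * (e t \<bullet> e t) - c * kR * (E t \<bullet> E t) - c * kO * (E t \<bullet> e t) + c * (D t \<bullet> (J *v e t)))"
  have dW: "(W has_real_derivative W' t) (at t within ?S)" if "t \<ge> 0" for t
  proof -
    have "(W has_real_derivative - kO * (e t \<bullet> e t) + c * (E t \<bullet> (J *v de t) + D t \<bullet> (J *v e t))) (at t within ?S)"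
    proof -
      have "((\<lambda>t. V t + c * (E t \<bullet> (J *v e t))) has_real_derivative - kO * (e t \<bullet> e t) + c * (E t \<bullet> (J *v de t) + D t \<bullet> (J *v e t))) (at t within ?S)"
        by (intro DERIV_add DERIV_cmult dV[OF that spos[OF that]] dEJ[OF that])
      moreover have "(\<lambda>t. V t + c * (E t \<bullet> (J *v e t))) = W" unfolding V_def W_def by auto
      ultimately show ?thesis by simp
    qed
    moreover have "- kO * (e t \<bullet> e t) + c * (E t \<bullet> (J *v de t) + D t \<bullet> (J *v e t)) = W' t"
      unfolding W'_def Jde[OF that] by (simp add: inner_diff_right algebra_simps inner_commute)
    ultimately show ?thesis by simp
  qed
  have W'b: "W' t \<le> - a3 * (E t \<bullet> E t + e t \<bullet> e t)" if "t \<ge> 0" for t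
  proof -
    have x: "\<bar>E t \<bullet> e t\<bar> \<le> norm (E t) * norm (e t)" by (rule Cauchy_Schwarz_ineq2)
    have y: "\<bar>D t \<bullet> (J *v e t)\<bar> \<le> M * (norm (e t) * norm (e t))"
    proof -
      have "\<bar>D t \<bullet> (J *v e t)\<bar> \<le> M * (norm (D t) * norm (e t))" by (rule CS)
      also have "\<dots> \<le> M * (norm (e t) * norm (e t))"
        using nD[OF that] M(1) by (intro mult_left_mono mult_right_mono) auto
      finally show ?thesis .
    qed
    have "- kO * (norm (e t) * norm (e t)) - c * kR * (norm (E t) * norm (E t)) - c * kO * (E t \<bullet> e t) + c * (D t \<bullet> (J *v e t))
        \<le> - min (c * kR / 2) (kO / 2) * (norm (E t) * norm (E t) + norm (e t) * norm (e t))"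
      by (rule R1[OF norm_ge_zero norm_ge_zero kR kO M(1) c(1) x y c(2)])
    then show ?thesis unfolding W'_def a3_def ab .
  qed
  define G where "G = (\<lambda>t. W t * exp (\<beta> * t))"
  have dG: "(G has_real_derivative (W' t * exp (\<beta> * t) + exp (\<beta> * t) * \<beta> * W t)) (at t within ?S)" if "t \<ge> 0" for t
  proof -
    have de1: "((\<lambda>t. exp (\<beta> * t)) has_real_derivative exp (\<beta> * t) * \<beta>) (at t within ?S)"
      using DERIV_chain'[OF DERIV_cmult[OF DERIV_ident, of \<beta>] DERIV_exp[of "\<beta> * t"]] by simp
    show ?thesis unfolding G_def by (rule DERIV_mult[OF dW[OF that] de1])
  qed
  have dGn: "W' t * exp (\<beta> * t) + exp (\<beta> * t) * \<beta> * W t \<le> 0" if "t \<ge> 0" for t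
  proof -
    have "\<beta> * W t \<le> \<beta> * (a2 * (E t \<bullet> E t + e t \<bullet> e t))" using Wup[OF that] bp by simp
    also have "\<dots> = a3 * (E t \<bullet> E t + e t \<bullet> e t)" unfolding \<beta>_def using a2p by simp
    finally have "W' t + \<beta> * W t \<le> 0" using W'b[OF that] by simp
    then have "(W' t + \<beta> * W t) * exp (\<beta> * t) \<le> 0" by (simp add: mult_nonpos_nonneg)
    then show ?thesis by (simp add: algebra_simps)
  qed
  have cG: "continuous_on ?S G"
    using dG by (auto simp: continuous_on_eq_continuous_within intro: DERIV_continuous)
  have Gdec: "G t \<le> G 0" if "t \<ge> 0" for t
    by (rule decr_on[OF that cG dG dGn]) auto
  have part2: "norm (E t) ^ 2 + norm (e t) ^ 2 \<le> (a2 / a1) * (norm (E 0) ^ 2 + norm (e 0) ^ 2) * exp (- \<beta> * t)"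
    if "t \<ge> 0" for t
  proof -
    have z: "norm (E t) ^ 2 + norm (e t) ^ 2 = E t \<bullet> E t + e t \<bullet> e t" for t by (simp add: power2_norm_eq_inner)
    have "a1 * (E t \<bullet> E t + e t \<bullet> e t) \<le> W t" by (rule Wlow[OF that])
    also have "W t = G t * exp (- \<beta> * t)" unfolding G_def by (simp add: exp_minus field_simps)
    also have "\<dots> \<le> G 0 * exp (- \<beta> * t)" using Gdec[OF that] by simp
    also have "G 0 = W 0" unfolding G_def by simp
    also have "W 0 * exp (- \<beta> * t) \<le> a2 * (E 0 \<bullet> E 0 + e 0 \<bullet> e 0) * exp (- \<beta> * t)"
      using Wup[of 0] by simp
    finally have "a1 * (E t \<bullet> E t + e t \<bullet> e t) \<le> a2 * (E 0 \<bullet> E 0 + e 0 \<bullet> e 0) * exp (- \<beta> * t)" .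
    then have "E t \<bullet> E t + e t \<bullet> e t \<le> (a2 / a1) * (E 0 \<bullet> E 0 + e 0 \<bullet> e 0) * exp (- \<beta> * t)"
      using a1p by (simp add: field_simps)
    then show ?thesis unfolding z .
  qed
  show ?thesis
    using part1 part2 unfolding E_def e_def a1_def a2_def a3_def \<beta>_def by simp
qed


theorem proposition3:
  fixes J :: "real^3^3" and kR kO :: real
  assumes J: "sym_posdef J" and kR: "kR > 0" and kO: "kO > 0"
  shows "\<exists>C \<beta>. C > 0 \<and> \<beta> > 0 \<and>
    (\<forall>(Rd :: real \<Rightarrow> real^3^3) (Omd :: real \<Rightarrow> real^3) (dOmd :: real \<Rightarrow> real^3)
       (R :: real \<Rightarrow> real^3^3) (Om :: real \<Rightarrow> real^3) (dOm :: real \<Rightarrow> real^3).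
      (\<forall>t\<ge>0. Rd t \<in> SO3) \<and>
      (\<forall>t\<ge>0. (Rd has_vector_derivative (Rd t ** hat (Omd t))) (at t within {0..})) \<and>
      (\<forall>t\<ge>0. (Omd has_vector_derivative dOmd t) (at t within {0..})) \<and>
      continuous_on {0..} dOmd \<and>
      (\<forall>t\<ge>0. R t \<in> SO3) \<and>
      (\<forall>t\<ge>0. (R has_vector_derivative (R t ** hat (Om t))) (at t within {0..})) \<and>
      (\<forall>t\<ge>0. (Om has_vector_derivative dOm t) (at t within {0..})) \<and>
      (\<forall>t\<ge>0. J *v dOm t + cross3 (Om t) (J *v Om t)
               = ctrl J kR kO (R t) (Om t) (Rd t) (Omd t) (dOmd t)) \<and>
      Psi (R 0) (Rd 0) < 2 \<and>
      norm (eOmega (R 0) (Om 0) (Rd 0) (Omd 0)) ^ 2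
        < 2 * kR / lambda_max J * (2 - Psi (R 0) (Rd 0))
      \<longrightarrow>
      (\<forall>t\<ge>0. Psi (R t) (Rd t) < 2) \<and>
      (\<forall>t\<ge>0. norm (eR (R t) (Rd t)) ^ 2 + norm (eOmega (R t) (Om t) (Rd t) (Omd t)) ^ 2
         \<le> C * (norm (eR (R 0) (Rd 0)) ^ 2 + norm (eOmega (R 0) (Om 0) (Rd 0) (Omd 0)) ^ 2)
             * exp (- \<beta> * t)))"
proof -
  have sym: "transpose J = J" using J by (simp add: sym_posdef_def)
  obtain m1 where m1: "m1 > 0" "\<And>x. m1 * (x \<bullet> x) \<le> x \<bullet> (J *v x)" using J_bounds(1)[OF J] by blast
  have lm: "\<And>x. x \<bullet> (J *v x) \<le> lambda_max J * (x \<bullet> x)" "lambda_max J > 0" using J_bounds(2,3)[OF J] by auto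
  have blJ: "bounded_linear (\<lambda>x. J *v x)" by (rule bounded_bilinear.bounded_linear_right[OF bb_mv])
  obtain M where M: "M > 0" "\<And>x. norm (J *v x) \<le> M * norm x"
    using bounded_linear.pos_bounded[OF blJ] by (metis mult.commute)
  define X where "X = kO^2 / (2 * kR) + M"
  have Xp: "X > 0" unfolding X_def using kR M by (simp add: add_nonneg_pos)
  define c where "c = min (kO / (2 * X)) (min (m1 / 4) (kR / 2) / M)"
  have cp: "c > 0" unfolding c_def using kO Xp m1 kR M by simp
  have c1: "c * (kO^2 / (2 * kR) + M) \<le> kO / 2"
  proof -
    have h: "c \<le> kO / (2 * X)" unfolding c_def by simp
    have "c * X \<le> kO / (2 * X) * X" by (rule mult_right_mono[OF h]) (use Xp in simp)
    also have "\<dots> = kO / 2" using Xp by simp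
    finally show ?thesis unfolding X_def .
  qed
  have cM: "c * M \<le> min (m1 / 4) (kR / 2)"
  proof -
    have h: "c \<le> min (m1 / 4) (kR / 2) / M" unfolding c_def by simp
    have "c * M \<le> min (m1 / 4) (kR / 2) / M * M" by (rule mult_right_mono[OF h]) (use M in simp)
    also have "\<dots> = min (m1 / 4) (kR / 2)" using M by simp
    finally show ?thesis .
  qed
  have c3: "c * M \<le> m1 / 4" and c4: "c * M \<le> kR / 2" using cM by auto
  define a1 where "a1 = min (m1 / 4) (kR / 2)"
  define a2 where "a2 = M / 2 + 2 * kR + c * M"
  define a3 where "a3 = min (c * kR / 2) (kO / 2)"
  have a1p: "a1 > 0" unfolding a1_def using m1 kR by simp
  have a2p: "a2 > 0" unfolding a2_def using M kR cp by (simp add: add_pos_pos)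
  have a3p: "a3 > 0" unfolding a3_def using cp kR kO by simp
  show ?thesis
  proof (rule exI[of _ "a2 / a1"], rule exI[of _ "a3 / a2"], intro conjI[OF _ conjI] allI impI)
    show "a2 / a1 > 0" using a1p a2p by simp
    show "a3 / a2 > 0" using a3p a2p by simp
    fix Rd :: "real \<Rightarrow> real^3^3" and Omd dOmd :: "real \<Rightarrow> real^3"
      and R :: "real \<Rightarrow> real^3^3" and Om dOm :: "real \<Rightarrow> real^3"
    assume H: "(\<forall>t\<ge>0. Rd t \<in> SO3) \<and>
      (\<forall>t\<ge>0. (Rd has_vector_derivative (Rd t ** hat (Omd t))) (at t within {0..})) \<and>
      (\<forall>t\<ge>0. (Omd has_vector_derivative dOmd t) (at t within {0..})) \<and>
      continuous_on {0..} dOmd \<and>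
      (\<forall>t\<ge>0. R t \<in> SO3) \<and>
      (\<forall>t\<ge>0. (R has_vector_derivative (R t ** hat (Om t))) (at t within {0..})) \<and>
      (\<forall>t\<ge>0. (Om has_vector_derivative dOm t) (at t within {0..})) \<and>
      (\<forall>t\<ge>0. J *v dOm t + cross3 (Om t) (J *v Om t)
               = ctrl J kR kO (R t) (Om t) (Rd t) (Omd t) (dOmd t)) \<and>
      Psi (R 0) (Rd 0) < 2 \<and>
      norm (eOmega (R 0) (Om 0) (Rd 0) (Omd 0)) ^ 2
        < 2 * kR / lambda_max J * (2 - Psi (R 0) (Rd 0))"
    have T: "(\<forall>t\<ge>0. Psi (R t) (Rd t) < 2) \<and>
      (\<forall>t\<ge>0. norm (eR (R t) (Rd t)) ^ 2 + norm (eOmega (R t) (Om t) (Rd t) (Omd t)) ^ 2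
         \<le> ((M / 2 + 2 * kR + c * M) / min (m1 / 4) (kR / 2)) * (norm (eR (R 0) (Rd 0)) ^ 2 + norm (eOmega (R 0) (Om 0) (Rd 0) (Omd 0)) ^ 2)
             * exp (- (min (c * kR / 2) (kO / 2) / (M / 2 + 2 * kR + c * M)) * t))"
      using H by (intro traj[OF sym m1 M lm kR kO cp c1 c3 c4]) auto
    show "(\<forall>t\<ge>0. Psi (R t) (Rd t) < 2) \<and>
      (\<forall>t\<ge>0. norm (eR (R t) (Rd t)) ^ 2 + norm (eOmega (R t) (Om t) (Rd t) (Omd t)) ^ 2
         \<le> a2 / a1 * (norm (eR (R 0) (Rd 0)) ^ 2 + norm (eOmega (R 0) (Om 0) (Rd 0) (Omd 0)) ^ 2)
             * exp (- (a3 / a2) * t))"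
      using T unfolding a1_def a2_def a3_def .
  qed
qed

end
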